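(* For $n\ge 1$ let $\varphi_n:=\forall x\forall y\,\big(\bigwedge_{i<n}(p_i(x)\leftrightarrow p_i(y))\to(p_n(x)\leftrightarrow p_n(y))\big)$, a formula of $\mathcal{FO}^m_{\mathrm{RCC8}}$. Then every $\mathcal{L}_{\mathrm{RCC8}}$-formula $\psi_n$ that is equivalent to $\varphi_n$ on the class $\mathcal{RS}$ of all region structures (i.e., for every region model $\mathfrak M$ based on a structure in $\mathcal{RS}$ and every region $s$, $\mathfrak M,s\models\psi_n$ iff $\mathfrak M\models\varphi_n$) has length $2^{\Omega(n)}$.
   Context: A (general) region structure is a relational structure $\langle W,\mathrm{dc},\mathrm{ec},\mathrm{po},\mathrm{eq},\mathrm{tpp},\mathrm{ntpp},\mathrm{tppi},\mathrm{ntppi}\rangle$ with $W\ne\emptyset$, whose eight binary relations are mutually disjoint and jointly exhaustive on $W\times W$, with $\mathrm{eq}$ the identity, $\mathrm{dc},\mathrm{ec},\mathrm{po}$ symmetric, $\mathrm{tppi},\mathrm{ntppi}$ the inverses of $\mathrm{tpp},\mathrm{ntpp}$, and satisfying the standard RCC8 composition table; $\mathcal{RS}$ is the class of all of them. $\mathcal{L}_{\mathrm{RCC8}}$ is the modal language with propositional variables $p_1,p_2,\dots$ (and $p_0$), $\neg,\wedge$, and box operators $[r]$ for each of the eight relations, interpreted in region models (region structure plus valuation $p_i^{\mathfrak M}\subseteq W$) by $\mathfrak M,s\models[r]\varphi$ iff $\mathfrak M,t\models\varphi$ for all $t$ with $(s,t)\in r$. $\mathcal{FO}^m_{\mathrm{RCC8}}$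 is first-order logic with equality, eight binary predicates for the relations and unary predicates $p_0,p_1,\dots$, interpreted in region models in the obvious way. *)

theory Defs
  imports Complex_Main
begin

datatype rcc = DC | EC | PO | TPP | NTPP | TPPi | NTPPi | EQ

definition all_rcc :: "rcc set" where
  "all_rcc = {DC, EC, PO, TPP, NTPP, TPPi, NTPPi, EQ}"

text \<open>Standard RCC8 composition table: comp r s is the set of relations that
  may hold between x and y when x r z and z s y.\<close>
fun comp :: "rcc \<Rightarrow> rcc \<Rightarrow> rcc set" where
  "comp EQ s = {s}"
| "comp r EQ = {r}"
| "comp DC DC = all_rcc"
| "comp DC EC = {DC, EC, PO, TPP, NTPP}"
| "comp DC PO = {DC, EC, PO, TPP, NTPP}"
| "comp DC TPP = {DC, EC, PO, TPP, NTPP}"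
| "comp DC NTPP = {DC, EC, PO, TPP, NTPP}"
| "comp DC TPPi = {DC}"
| "comp DC NTPPi = {DC}"
| "comp EC DC = {DC, EC, PO, TPPi, NTPPi}"
| "comp EC EC = {DC, EC, PO, TPP, TPPi, EQ}"
| "comp EC PO = {DC, EC, PO, TPP, NTPP}"
| "comp EC TPP = {EC, PO, TPP, NTPP}"
| "comp EC NTPP = {PO, TPP, NTPP}"
| "comp EC TPPi = {DC, EC}"
| "comp EC NTPPi = {DC}"
| "comp PO DC = {DC, EC, PO, TPPi, NTPPi}"
| "comp PO EC = {DC, EC, PO, TPPi, NTPPi}"
| "comp PO PO = all_rcc"
| "comp PO TPP = {PO, TPP, NTPP}"
| "comp PO NTPP = {PO, TPP, NTPP}"
| "comp PO TPPi = {DC, EC, PO, TPPi, NTPPi}"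
| "comp PO NTPPi = {DC, EC, PO, TPPi, NTPPi}"
| "comp TPP DC = {DC}"
| "comp TPP EC = {DC, EC}"
| "comp TPP PO = {DC, EC, PO, TPP, NTPP}"
| "comp TPP TPP = {TPP, NTPP}"
| "comp TPP NTPP = {NTPP}"
| "comp TPP TPPi = {DC, EC, PO, TPP, TPPi, EQ}"
| "comp TPP NTPPi = {DC, EC, PO, TPPi, NTPPi}"
| "comp NTPP DC = {DC}"
| "comp NTPP EC = {DC}"
| "comp NTPP PO = {DC, EC, PO, TPP, NTPP}"
| "comp NTPP TPP = {NTPP}"
| "comp NTPP NTPP = {NTPP}"
| "comp NTPP TPPi = {DC, EC, PO, TPP, NTPP}"
| "comp NTPP NTPPi = all_rcc"
| "comp TPPi DC = {DC, EC, PO, TPPi, NTPPi}"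
| "comp TPPi EC = {EC, PO, TPPi, NTPPi}"
| "comp TPPi PO = {PO, TPPi, NTPPi}"
| "comp TPPi TPP = {PO, TPP, TPPi, EQ}"
| "comp TPPi NTPP = {PO, TPP, NTPP}"
| "comp TPPi TPPi = {TPPi, NTPPi}"
| "comp TPPi NTPPi = {NTPPi}"
| "comp NTPPi DC = {DC, EC, PO, TPPi, NTPPi}"
| "comp NTPPi EC = {PO, TPPi, NTPPi}"
| "comp NTPPi PO = {PO, TPPi, NTPPi}"
| "comp NTPPi TPP = {PO, TPPi, NTPPi}"
| "comp NTPPi NTPP = {PO, TPP, NTPP, TPPi, NTPPi, EQ}"
| "comp NTPPi TPPi = {NTPPi}"
| "comp NTPPi NTPPi = {NTPPi}"

definition region_structure :: "'w set \<Rightarrow> (rcc \<Rightarrow> 'w \<Rightarrow> 'w \<Rightarrow> bool) \<Rightarrow> bool" where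
  "region_structure W R \<longleftrightarrow>
     W \<noteq> {}
   \<and> (\<forall>r x y. R r x y \<longrightarrow> x \<in> W \<and> y \<in> W)
   \<and> (\<forall>x\<in>W. \<forall>y\<in>W. \<exists>!r. R r x y)
   \<and> (\<forall>x\<in>W. \<forall>y\<in>W. R EQ x y \<longleftrightarrow> x = y)
   \<and> (\<forall>x y. R DC x y \<longrightarrow> R DC y x)
   \<and> (\<forall>x y. R EC x y \<longrightarrow> R EC y x)
   \<and> (\<forall>x y. R PO x y \<longrightarrow> R PO y x)
   \<and> (\<forall>x y. R TPPi x y \<longleftrightarrow> R TPP y x)
   \<and> (\<forall>x y. R NTPPi x y \<longleftrightarrow> R NTPP y x)
   \<and> (\<forall>r s x y z. R r x z \<longrightarrow> R s z y \<longrightarrow> (\<exists>t\<in>comp r s. R t x y))"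

datatype fm = Var nat | Neg fm | Conj fm fm | Box rcc fm

fun sat :: "(rcc \<Rightarrow> 'w \<Rightarrow> 'w \<Rightarrow> bool) \<Rightarrow> (nat \<Rightarrow> 'w set) \<Rightarrow> 'w \<Rightarrow> fm \<Rightarrow> bool" where
  "sat R V s (Var i) \<longleftrightarrow> s \<in> V i"
| "sat R V s (Neg f) \<longleftrightarrow> \<not> sat R V s f"
| "sat R V s (Conj f g) \<longleftrightarrow> sat R V s f \<and> sat R V s g"
| "sat R V s (Box r f) \<longleftrightarrow> (\<forall>t. R r s t \<longrightarrow> sat R V t f)"

fun fm_len :: "fm \<Rightarrow> nat" where
  "fm_len (Var i) = 1"
| "fm_len (Neg f) = 1 + fm_len f"
| "fm_len (Conj f g) = 1 + fm_len f + fm_len g"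
| "fm_len (Box r f) = 1 + fm_len f"

section \<open>The first-order sentence phi_n (its truth condition in a region model)\<close>

definition phi_holds :: "'w set \<Rightarrow> (nat \<Rightarrow> 'w set) \<Rightarrow> nat \<Rightarrow> bool" where
  "phi_holds W V n \<longleftrightarrow>
     (\<forall>x\<in>W. \<forall>y\<in>W. (\<forall>i<n. x \<in> V i \<longleftrightarrow> y \<in> V i) \<longrightarrow> (x \<in> V n \<longleftrightarrow> y \<in> V n))"

definition equiv_RS :: "fm \<Rightarrow> nat \<Rightarrow> bool" where
  "equiv_RS \<psi> n \<longleftrightarrow>
     (\<forall>(W::nat set) R V. region_structure W R \<longrightarrow> (\<forall>i. V i \<subseteq> W) \<longrightarrow>
        (\<forall>s\<in>W. sat R V s \<psi> \<longleftrightarrow> phi_holds W V n))"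

end

theory Submission
  imports Defs
begin

fun ev :: "nat set set \<Rightarrow> nat set \<Rightarrow> fm \<Rightarrow> bool" where
  "ev S l (Var i) = (i \<in> l)"
| "ev S l (Neg f) = (\<not> ev S l f)"
| "ev S l (Conj f g) = (ev S l f \<and> ev S l g)"
| "ev S l (Box r f) = (if r = DC then (\<forall>l'\<in>S. ev S l' f) else if r = EQ then ev S l f else True)"

fun evb :: "(fm \<Rightarrow> bool) \<Rightarrow> nat set \<Rightarrow> fm \<Rightarrow> bool" where
  "evb b l (Var i) = (i \<in> l)"
| "evb b l (Neg f) = (\<not> evb b l f)"
| "evb b l (Conj f g) = (evb b l f \<and> evb b l g)"
| "evb b l (Box r f) = (if r = DC then b f else if r = EQ then evb b l f else True)"

fun boxes :: "fm \<Rightarrow> fm set" where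
  "boxes (Var i) = {}"
| "boxes (Neg f) = boxes f"
| "boxes (Conj f g) = boxes f \<union> boxes g"
| "boxes (Box r f) = (if r = DC then insert f (boxes f) else boxes f)"

lemma boxes_finite: "finite (boxes f)"
  by (induction f) auto

lemma boxes_card: "card (boxes f) \<le> fm_len f"
proof (induction f)
  case (Conj f g)
  then show ?case using card_Un_le[of "boxes f" "boxes g"] by simp
next
  case (Box r f)
  then show ?case using card_insert_le_m1[of "fm_len f + 1" "boxes f" f] boxes_finite[of f]
    by (auto simp: card_insert_if)
qed auto

lemma boxes_trans: "g \<in> boxes f \<Longrightarrow> boxes g \<subseteq> boxes f"
  by (induction f) (auto split: if_splits)

lemma ev_evb: "ev S l f = evb (\<lambda>g. \<forall>l'\<in>S. ev S l' g) l f"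
  by (induction f arbitrary: l) auto

lemma evb_agree: "(\<forall>h\<in>boxes g. b1 h = b2 h) \<Longrightarrow> evb b1 l g = evb b2 l g"
  by (induction g arbitrary: l) auto

lemma lemA:
  assumes "\<forall>g\<in>boxes f. (\<forall>l\<in>S. ev S l g) \<longrightarrow> ev S u g"
  shows "ev (insert u S) l f = ev S l f"
  using assms
proof (induction f arbitrary: l)
  case (Box r f)
  show ?case
  proof (cases "r = DC")
    case True
    have IH: "\<And>l. ev (insert u S) l f = ev S l f" using Box True by auto
    have h: "(\<forall>l\<in>S. ev S l f) \<longrightarrow> ev S u f" using Box.prems True by auto
    show ?thesis using True IH h by auto
  next
    case False
    then show ?thesis using Box by auto
  qed
qed auto

lemma ball_img: "f ` A = B \<Longrightarrow> (\<forall>x\<in>A. \<forall>y\<in>A. Q (f x) (f y)) = (\<forall>a\<in>B. \<forall>b\<in>B. Q a b)"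
  by blast

definition phiS :: "nat set set \<Rightarrow> nat \<Rightarrow> bool" where
  "phiS S n \<longleftrightarrow> (\<forall>a\<in>S. \<forall>b\<in>S. (\<forall>i<n. i \<in> a \<longleftrightarrow> i \<in> b) \<longrightarrow> (n \<in> a \<longleftrightarrow> n \<in> b))"

lemma realize:
  assumes eq: "equiv_RS \<psi> n" and fin: "finite S" and ne: "S \<noteq> {}" and lS: "l \<in> S"
  shows "ev S l \<psi> \<longleftrightarrow> phiS S n"
proof -
  obtain xs where xs: "set xs = S" using finite_list[OF fin] by blast
  define m where "m = length xs"
  have m0: "m > 0" using xs ne m_def by auto
  define W :: "nat set" where "W = {..<2*m}"
  define lab where "lab j = xs ! (j div 2)" for j
  define V where "V i = {j\<in>W. i \<in> lab j}" for i
  define R where "R r x y = (x\<in>W \<and> y\<in>W \<and> (if x=y then r=EQ else r=DC))" for r x y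
  have labW: "lab x \<in> S" if "x \<in> W" for x
    using that xs unfolding lab_def W_def m_def by auto
  have twin: "\<exists>j\<in>W. j \<noteq> x \<and> lab j = a" if "a \<in> S" for x a
  proof -
    have "a \<in> set xs" using that xs by simp
    then obtain k where k: "k < m" "xs ! k = a" unfolding m_def in_set_conv_nth by blast
    have c1: "lab (2*k) = a" "lab (2*k+1) = a" using k unfolding lab_def by auto
    have c2: "2*k \<in> W" "2*k+1 \<in> W" using k W_def by auto
    show ?thesis
    proof (cases "x = 2*k")
      case True
      then show ?thesis using c1 c2 by (intro bexI[of _ "2*k+1"]) auto
    next
      case False
      then show ?thesis using c1 c2 by (intro bexI[of _ "2*k"]) auto
    qed
  qed
  have rs: "region_structure W R"
    unfolding region_structure_def
  proof (intro conjI)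
    have "0 \<in> W" using m0 W_def by simp
    then show "W \<noteq> {}" by blast
    show "\<forall>r s x y z. R r x z \<longrightarrow> R s z y \<longrightarrow> (\<exists>t\<in>comp r s. R t x y)"
    proof (intro allI impI)
      fix r s x y z assume a: "R r x z" "R s z y"
      show "\<exists>t\<in>comp r s. R t x y"
      proof (cases "x = z")
        case True then show ?thesis using a unfolding R_def by auto
      next
        case False
        then have r: "r = DC" using a R_def by auto
        show ?thesis
        proof (cases "z = y")
          case True then show ?thesis using a r unfolding R_def by auto
        next
          case False
          then have "s = DC" using a R_def by auto
          then show ?thesis using a r unfolding R_def by (auto simp: all_rcc_def)
        qed
      qed
    qed
  qed (auto simp: R_def)
  have sat_ev: "sat R V x f = ev S (lab x) f" if "x \<in> W" for x f
    using that
  proof (induction f arbitrary: x)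
    case (Var i) then show ?case by (auto simp: V_def)
  next
    case (Box r f)
    show ?case
    proof (cases "r = DC")
      case True
      have Rx: "\<And>t. R DC x t = (t \<in> W \<and> t \<noteq> x)" using Box.prems by (auto simp: R_def)
      have "(\<forall>t. R r x t \<longrightarrow> sat R V t f) = (\<forall>t\<in>W. t \<noteq> x \<longrightarrow> ev S (lab t) f)"
        using Box.IH True Rx by auto
      also have "\<dots> = (\<forall>a\<in>S. ev S a f)"
        using twin labW by blast
      finally show ?thesis using True by simp
    next
      case False
      have Rx: "\<And>t. R r x t = (r = EQ \<and> t = x)" using Box.prems False by (auto simp: R_def)
      show ?thesis using Box.IH Box.prems False Rx by auto
    qed
  qed auto
  have imgW: "lab ` W = S"
  proof
    show "lab ` W \<subseteq> S" using labW by blast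
    show "S \<subseteq> lab ` W"
    proof
      fix a assume "a \<in> S"
      then obtain j where "j \<in> W" "lab j = a" using twin by blast
      then show "a \<in> lab ` W" by blast
    qed
  qed
  have ph: "phi_holds W V n = phiS S n"
  proof -
    have "phi_holds W V n = (\<forall>x\<in>W. \<forall>y\<in>W. (\<forall>i<n. i \<in> lab x \<longleftrightarrow> i \<in> lab y) \<longrightarrow> (n \<in> lab x \<longleftrightarrow> n \<in> lab y))"
      unfolding phi_holds_def V_def by auto
    also have "\<dots> = phiS S n"
      unfolding phiS_def by (rule ball_img[OF imgW, of "\<lambda>a b. (\<forall>i<n. i \<in> a \<longleftrightarrow> i \<in> b) \<longrightarrow> (n \<in> a \<longleftrightarrow> n \<in> b)"])
    finally show ?thesis .
  qed
  obtain x where x: "x \<in> W" "lab x = l" using twin[OF lS] by blast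
  have "\<forall>i. V i \<subseteq> W" by (auto simp: V_def)
  then have "sat R V x \<psi> \<longleftrightarrow> phi_holds W V n"
    using eq rs x unfolding equiv_RS_def by blast
  then show ?thesis using sat_ev[OF x(1)] x ph by simp
qed

lemma main_bound:
  assumes eq: "equiv_RS \<psi> n"
  shows "2 ^ n \<le> fm_len \<psi>"
proof -
  define P where "P = Pow {..<n}"
  define sig where "sig A \<tau> = (if \<tau> \<in> A then insert n \<tau> else \<tau>)" for A and \<tau> :: "nat set"
  define SA where "SA A = sig A ` P" for A
  define uu where "uu A \<tau> = (if \<tau> \<in> A then \<tau> else insert n \<tau>)" for A and \<tau> :: "nat set"
  define F where "F A = {g \<in> boxes \<psi>. \<forall>l\<in>SA A. ev (SA A) l g}" for A
  have finP: "finite P" unfolding P_def by auto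
  have nP: "\<And>\<tau>. \<tau> \<in> P \<Longrightarrow> n \<notin> \<tau>" unfolding P_def by auto
  have finSA: "finite (SA A)" for A using finP SA_def by auto
  have neSA: "SA A \<noteq> {}" for A unfolding SA_def P_def by auto
  have phi1: "phiS (SA A) n" for A
    unfolding phiS_def SA_def
  proof (clarify)
    fix t1 t2 assume t: "t1 \<in> P" "t2 \<in> P" and e: "\<forall>i<n. (i \<in> sig A t1) = (i \<in> sig A t2)"
    have "t1 = t2"
    proof
      show "t1 \<subseteq> t2" using t e unfolding P_def sig_def by (auto split: if_splits)
      show "t2 \<subseteq> t1" using t e unfolding P_def sig_def by (auto split: if_splits)
    qed
    then show "(n \<in> sig A t1) = (n \<in> sig A t2)" by simp
  qed
  have phi2: "\<not> phiS (insert (uu A \<tau>) (SA A)) n" if "\<tau> \<in> P" for A \<tau>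
  proof -
    have "sig A \<tau> \<in> SA A" using that SA_def by auto
    moreover have "\<forall>i<n. (i \<in> sig A \<tau>) = (i \<in> uu A \<tau>)" unfolding sig_def uu_def by auto
    moreover have "(n \<in> sig A \<tau>) \<noteq> (n \<in> uu A \<tau>)" using nP[OF that] unfolding sig_def uu_def by auto
    ultimately show ?thesis unfolding phiS_def by blast
  qed
  have wit: "\<exists>g\<in>boxes \<psi>. (\<forall>l\<in>SA A. ev (SA A) l g) \<and> \<not> ev (SA A) (uu A \<tau>) g"
    if "\<tau> \<in> P" for A \<tau>
  proof (rule ccontr)
    assume "\<not> ?thesis"
    then have h: "\<forall>g\<in>boxes \<psi>. (\<forall>l\<in>SA A. ev (SA A) l g) \<longrightarrow> ev (SA A) (uu A \<tau>) g" by blast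
    obtain l where l: "l \<in> SA A" using neSA by blast
    have r1: "ev (SA A) l \<psi>" using realize[OF eq finSA neSA l] phi1 by blast
    have fi: "finite (insert (uu A \<tau>) (SA A))" using finSA by blast
    have ni: "insert (uu A \<tau>) (SA A) \<noteq> {}" by blast
    have li: "l \<in> insert (uu A \<tau>) (SA A)" using l by blast
    have r2: "\<not> ev (insert (uu A \<tau>) (SA A)) l \<psi>"
      using realize[OF eq fi ni li] phi2[OF that] by blast
    show False using lemA[OF h, of l] r1 r2 by blast
  qed
  have inj: "inj_on F (Pow P)"
  proof (rule inj_onI, rule ccontr)
    fix A1 A2 assume A: "A1 \<in> Pow P" "A2 \<in> Pow P" "F A1 = F A2" "A1 \<noteq> A2"
    then obtain \<tau> where t: "\<tau> \<in> P" "(\<tau> \<in> A1) \<noteq> (\<tau> \<in> A2)" by blast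
    have u: "uu A1 \<tau> \<in> SA A2" using t unfolding SA_def uu_def sig_def by (auto intro!: image_eqI[of _ _ \<tau>])
    obtain g where g: "g \<in> boxes \<psi>" "\<forall>l\<in>SA A1. ev (SA A1) l g" "\<not> ev (SA A1) (uu A1 \<tau>) g"
      using wit[OF t(1)] by blast
    have "g \<in> F A2" using g A(3) unfolding F_def by auto
    then have e2: "ev (SA A2) (uu A1 \<tau>) g" using u unfolding F_def by auto
    have agree: "\<forall>h\<in>boxes g. (\<forall>l'\<in>SA A1. ev (SA A1) l' h) = (\<forall>l'\<in>SA A2. ev (SA A2) l' h)"
    proof
      fix h assume "h \<in> boxes g"
      then have "h \<in> boxes \<psi>" using boxes_trans[OF g(1)] by auto
      then show "(\<forall>l'\<in>SA A1. ev (SA A1) l' h) = (\<forall>l'\<in>SA A2. ev (SA A2) l' h)"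
        using A(3) unfolding F_def by blast
    qed
    have "ev (SA A1) (uu A1 \<tau>) g = ev (SA A2) (uu A1 \<tau>) g"
      using evb_agree[OF agree] ev_evb by metis
    then show False using g(3) e2 by simp
  qed
  have "F ` Pow P \<subseteq> Pow (boxes \<psi>)" unfolding F_def by auto
  then have "card (Pow P) \<le> card (Pow (boxes \<psi>))"
    using card_inj_on_le[OF inj] boxes_finite by auto
  then have "(2::nat) ^ (2 ^ n) \<le> 2 ^ card (boxes \<psi>)"
    using finP boxes_finite by (simp add: card_Pow P_def)
  then have "2 ^ n \<le> card (boxes \<psi>)" by simp
  then show ?thesis using boxes_card[of \<psi>] by simp
qed

theorem theorem3p2:
  shows "\<exists>c::real. c > 0 \<and> (\<exists>N::nat. \<forall>n\<ge>N. \<forall>\<psi>. n \<ge> 1 \<longrightarrow> equiv_RS \<psi> n \<longrightarrow>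
            real (fm_len \<psi>) \<ge> 2 powr (c * real n))"
proof (intro exI conjI allI impI)
  show "(1::real) > 0" by simp
  fix n :: nat and \<psi> assume "equiv_RS \<psi> n"
  then have "2 ^ n \<le> fm_len \<psi>" by (rule main_bound)
  then have "(2::real) ^ n \<le> real (fm_len \<psi>)"
    by (metis numeral_power_le_of_nat_cancel_iff)
  then show "real (fm_len \<psi>) \<ge> 2 powr (1 * real n)"
    by (simp add: powr_realpow)
qed

end
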